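(* Let $G$ be a finite simple graph with a clique vertex-partition $\Pi$, and let $t\ge 2$ be an integer. Then $\mathrm{CF}_t(G(\Pi,t))$ is $(t-2)$-decomposable. Consequently, $\mathrm{CF}_t(G(\Pi,t))$ is shellable.
   Context: A clique vertex-partition of $G$ is a collection $\Pi=\{W_1,\dots,W_p\}$ of pairwise disjoint (possibly empty) vertex sets each inducing a clique, whose union is $V(G)$. The $t$-clique whiskering $G(\Pi,t)$ is obtained from $G$ by adding, for each $i$, $t-1$ new distinct vertices $x_{i,1},\dots,x_{i,t-1}$ and making $W_i\cup\{x_{i,1},\dots,x_{i,t-1}\}$ a clique; no other edges are added. $\mathrm{CF}_t(\cdot)$ is the simplicial complex on the vertex set whose faces are the vertex subsets inducing no $t$-clique. For a simplicial complex $\Delta$ on $V$ and face $F$: $\operatorname{link}_\Delta(F)=\{F':F'\cap F=\emptyset,F'\cup F\in\Delta\}$, $\Delta\setminus F=\{H\in\Delta:H\cap F=\emptyset\}$, $\dim F=|F|-1$. A face $\sigma$ is a shedding face if for every $\tau\in\Delta$ with $\sigma\subseteq\tau$ and every $v\in\sigma$ there is $w\in V\setminus\tau$ with $(\tau\cup\{w\})\setminus\{v\}\in\Delta$. $\Delta$ is $k$-decomposable if it is a simplex (including $\emptyset$, $\{\emptyset\}$) or has a shedding face $\sigma$ with $\dim\sigma\le k$ such that $\Delta\setminus\sigma$ and $\operatorname{link}_\Delta(\sigma)$ are $k$-decomposable. $\Delta$ is shellable if its facets admit an order $F_1,\dots,F_s$ such that for all $i<j$ there exist $v\in F_j\setminus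 F_i$ and $\ell<j$ with $F_j\setminus F_\ell=\{v\}$. *)

theory Defs
  imports Main
begin

definition simple_graph :: "'a set \<Rightarrow> ('a \<Rightarrow> 'a \<Rightarrow> bool) \<Rightarrow> bool" where
  "simple_graph V E \<longleftrightarrow> finite V \<and> (\<forall>u v. E u v \<longrightarrow> u \<in> V \<and> v \<in> V)
     \<and> (\<forall>u v. E u v \<longrightarrow> E v u) \<and> (\<forall>u. \<not> E u u)"

definition is_clique :: "'a set \<Rightarrow> ('a \<Rightarrow> 'a \<Rightarrow> bool) \<Rightarrow> 'a set \<Rightarrow> bool" where
  "is_clique V E W \<longleftrightarrow> W \<subseteq> V \<and> (\<forall>u\<in>W. \<forall>v\<in>W. u \<noteq> v \<longrightarrow> E u v)"

text \<open>A clique vertex-partition \<open>\<Pi> = {W_1,...,W_p}\<close>, given as the list [W_1,...,W_p]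
  (so that empty or repeated empty blocks are allowed and indexed).\<close>
definition clique_vertex_partition ::
  "'a set \<Rightarrow> ('a \<Rightarrow> 'a \<Rightarrow> bool) \<Rightarrow> 'a set list \<Rightarrow> bool" where
  "clique_vertex_partition V E \<Pi> \<longleftrightarrow>
     (\<forall>i < length \<Pi>. is_clique V E (\<Pi> ! i))
     \<and> (\<forall>i < length \<Pi>. \<forall>j < length \<Pi>. i \<noteq> j \<longrightarrow> \<Pi> ! i \<inter> \<Pi> ! j = {})
     \<and> \<Union> (set \<Pi>) = V"

text \<open>The t-clique whiskering G(\<Pi>,t): old vertices are \<open>Inl v\<close>, the new vertex
  x_{i,j} (i-th block, j = 1..t-1) is \<open>Inr (i, j)\<close>.\<close>
definition whisk_V :: "'a set \<Rightarrow> 'a set list \<Rightarrow> nat \<Rightarrow> ('a + nat \<times> nat) set" where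
  "whisk_V V \<Pi> t = Inl ` V \<union> {Inr (i, j) | i j. i < length \<Pi> \<and> 1 \<le> j \<and> j \<le> t - 1}"

fun whisk_E :: "('a \<Rightarrow> 'a \<Rightarrow> bool) \<Rightarrow> 'a set list \<Rightarrow> nat
                 \<Rightarrow> ('a + nat \<times> nat) \<Rightarrow> ('a + nat \<times> nat) \<Rightarrow> bool" where
  "whisk_E E \<Pi> t (Inl u) (Inl v) = E u v"
| "whisk_E E \<Pi> t (Inl u) (Inr (i, j)) =
     (i < length \<Pi> \<and> 1 \<le> j \<and> j \<le> t - 1 \<and> u \<in> \<Pi> ! i)"
| "whisk_E E \<Pi> t (Inr (i, j)) (Inl u) =
     (i < length \<Pi> \<and> 1 \<le> j \<and> j \<le> t - 1 \<and> u \<in> \<Pi> ! i)"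
| "whisk_E E \<Pi> t (Inr (i, j)) (Inr (i', j')) =
     (i < length \<Pi> \<and> 1 \<le> j \<and> j \<le> t - 1 \<and> 1 \<le> j' \<and> j' \<le> t - 1 \<and> i = i' \<and> j \<noteq> j')"

definition CF :: "nat \<Rightarrow> 'b set \<Rightarrow> ('b \<Rightarrow> 'b \<Rightarrow> bool) \<Rightarrow> 'b set set" where
  "CF t V E = {S. S \<subseteq> V \<and> \<not> (\<exists>C \<subseteq> S. card C = t \<and> is_clique V E C)}"

definition link :: "'b set set \<Rightarrow> 'b set \<Rightarrow> 'b set set" where
  "link \<Delta> F = {F'. F' \<inter> F = {} \<and> F' \<union> F \<in> \<Delta>}"

definition deletion :: "'b set set \<Rightarrow> 'b set \<Rightarrow> 'b set set" where
  "deletion \<Delta> F = {H \<in> \<Delta>. H \<inter> F = {}}"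

text \<open>The vertex set of \<Delta> is its union; a witness w with a face containing it is
  automatically a vertex.\<close>
definition shedding_face :: "'b set set \<Rightarrow> 'b set \<Rightarrow> bool" where
  "shedding_face \<Delta> \<sigma> \<longleftrightarrow> \<sigma> \<in> \<Delta> \<and>
     (\<forall>\<tau> \<in> \<Delta>. \<sigma> \<subseteq> \<tau> \<longrightarrow> (\<forall>v \<in> \<sigma>. \<exists>w. w \<notin> \<tau> \<and> (\<tau> \<union> {w}) - {v} \<in> \<Delta>))"

definition is_simplex :: "'b set set \<Rightarrow> bool" where
  "is_simplex \<Delta> \<longleftrightarrow> \<Delta> = {} \<or> (\<exists>F. finite F \<and> \<Delta> = Pow F)"

definition dim_face :: "'b set \<Rightarrow> int" where
  "dim_face F = int (card F) - 1"

inductive k_decomposable :: "int \<Rightarrow> 'b set set \<Rightarrow> bool" where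
  simplex: "is_simplex \<Delta> \<Longrightarrow> k_decomposable k \<Delta>"
| shed: "shedding_face \<Delta> \<sigma> \<Longrightarrow> dim_face \<sigma> \<le> k \<Longrightarrow>
         k_decomposable k (deletion \<Delta> \<sigma>) \<Longrightarrow> k_decomposable k (link \<Delta> \<sigma>) \<Longrightarrow>
         k_decomposable k \<Delta>"

definition facets :: "'b set set \<Rightarrow> 'b set set" where
  "facets \<Delta> = {F \<in> \<Delta>. \<forall>G \<in> \<Delta>. F \<subseteq> G \<longrightarrow> G = F}"

definition shellable :: "'b set set \<Rightarrow> bool" where
  "shellable \<Delta> \<longleftrightarrow> (\<exists>Fs. distinct Fs \<and> set Fs = facets \<Delta> \<and>
     (\<forall>i j. i < j \<and> j < length Fs \<longrightarrow>
        (\<exists>v \<in> Fs ! j - Fs ! i. \<exists>l < j. Fs ! j - Fs ! l = {v})))"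

end

theory Submission
  imports Defs
begin

definition dclosed :: "'b set set \<Rightarrow> bool" where
  "dclosed \<Delta> \<longleftrightarrow> (\<forall>S\<in>\<Delta>. \<forall>T. T \<subseteq> S \<longrightarrow> T \<in> \<Delta>)"

lemma facet_above:
  assumes "finite \<Delta>" "G \<in> \<Delta>"
  shows "\<exists>H \<in> facets \<Delta>. G \<subseteq> H"
proof -
  obtain m where m: "m \<in> \<Delta>" "G \<subseteq> m" "\<forall>b\<in>\<Delta>. m \<subseteq> b \<longrightarrow> m = b"
    using finite_has_maximal2[OF assms] by auto
  then have "m \<in> facets \<Delta>" unfolding facets_def by auto
  then show ?thesis using m by auto
qed

lemma facets_split:
  assumes sh: "shedding_face \<Delta> {v}" and dc: "dclosed \<Delta>"
  shows "facets \<Delta> = facets (deletion \<Delta> {v}) \<union> insert v ` facets (link \<Delta> {v})"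
proof
  show "facets \<Delta> \<subseteq> facets (deletion \<Delta> {v}) \<union> insert v ` facets (link \<Delta> {v})"
  proof
    fix F assume F: "F \<in> facets \<Delta>"
    show "F \<in> facets (deletion \<Delta> {v}) \<union> insert v ` facets (link \<Delta> {v})"
    proof (cases "v \<in> F")
      case False
      then show ?thesis using F unfolding facets_def deletion_def by auto
    next
      case True
      have "F - {v} \<in> facets (link \<Delta> {v})"
      proof -
        have "F - {v} \<in> link \<Delta> {v}" using F True unfolding facets_def link_def
          by (auto simp: insert_absorb)
        moreover have "\<forall>G\<in>link \<Delta> {v}. F - {v} \<subseteq> G \<longrightarrow> G = F - {v}"
        proof (intro ballI impI)
          fix G assume G: "G \<in> link \<Delta> {v}" "F - {v} \<subseteq> G"
          then have "G \<union> {v} \<in> \<Delta>" "v \<notin> G" unfolding link_def by auto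
          moreover have "F \<subseteq> G \<union> {v}" using G by auto
          ultimately have "G \<union> {v} = F" using F unfolding facets_def by auto
          then show "G = F - {v}" using \<open>v \<notin> G\<close> by auto
        qed
        ultimately show ?thesis unfolding facets_def by blast
      qed
      moreover have "F = insert v (F - {v})" using True by auto
      ultimately show ?thesis by blast
    qed
  qed
next
  show "facets (deletion \<Delta> {v}) \<union> insert v ` facets (link \<Delta> {v}) \<subseteq> facets \<Delta>"
  proof
    fix F assume "F \<in> facets (deletion \<Delta> {v}) \<union> insert v ` facets (link \<Delta> {v})"
    then show "F \<in> facets \<Delta>"
    proof
      assume F: "F \<in> facets (deletion \<Delta> {v})"
      have "F \<in> \<Delta>" "v \<notin> F" using F unfolding facets_def deletion_def by auto
      moreover have "\<forall>G\<in>\<Delta>. F \<subseteq> G \<longrightarrow> G = F"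
      proof (intro ballI impI)
        fix G assume G: "G \<in> \<Delta>" "F \<subseteq> G"
        show "G = F"
        proof (cases "v \<in> G")
          case False
          then show ?thesis using F G unfolding facets_def deletion_def by auto
        next
          case True
          then obtain w where w: "w \<notin> G" "(G \<union> {w}) - {v} \<in> \<Delta>"
            using sh G unfolding shedding_face_def by blast
          then have "(G \<union> {w}) - {v} \<in> deletion \<Delta> {v}" unfolding deletion_def by auto
          moreover have "F \<subseteq> (G \<union> {w}) - {v}" using G \<open>v \<notin> F\<close> by auto
          ultimately have "(G \<union> {w}) - {v} = F" using F unfolding facets_def by blast
          moreover have "w \<in> (G \<union> {w}) - {v}" using True w by auto
          ultimately show ?thesis using w G by auto
        qed
      qed
      ultimately show ?thesis unfolding facets_def by blast
    next
      assume "F \<in> insert v ` facets (link \<Delta> {v})"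
      then obtain F0 where F0: "F0 \<in> facets (link \<Delta> {v})" "F = insert v F0" by auto
      have "F \<in> \<Delta>" "v \<notin> F0" using F0 unfolding facets_def link_def by auto
      moreover have "\<forall>G\<in>\<Delta>. F \<subseteq> G \<longrightarrow> G = F"
      proof (intro ballI impI)
        fix G assume G: "G \<in> \<Delta>" "F \<subseteq> G"
        have "G - {v} \<in> link \<Delta> {v}" using G F0 unfolding link_def
          by (auto simp: insert_absorb)
        moreover have "F0 \<subseteq> G - {v}" using G F0 \<open>v \<notin> F0\<close> by auto
        ultimately have "G - {v} = F0" using F0 unfolding facets_def by blast
        then show "G = F" using F0 G by auto
      qed
      ultimately show ?thesis unfolding facets_def by blast
    qed
  qed
qed

lemma shell_step:
  assumes sh: "shedding_face \<Delta> {v}" and dc: "dclosed \<Delta>" and fin: "finite \<Delta>"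
    and s1: "shellable (deletion \<Delta> {v})" and s2: "shellable (link \<Delta> {v})"
  shows "shellable \<Delta>"
proof -
  obtain Fs1 where F1: "distinct Fs1" "set Fs1 = facets (deletion \<Delta> {v})"
     "\<forall>i j. i < j \<and> j < length Fs1 \<longrightarrow> (\<exists>u \<in> Fs1 ! j - Fs1 ! i. \<exists>l < j. Fs1 ! j - Fs1 ! l = {u})"
    using s1 unfolding shellable_def by blast
  obtain Fs2 where F2: "distinct Fs2" "set Fs2 = facets (link \<Delta> {v})"
     "\<forall>i j. i < j \<and> j < length Fs2 \<longrightarrow> (\<exists>u \<in> Fs2 ! j - Fs2 ! i. \<exists>l < j. Fs2 ! j - Fs2 ! l = {u})"
    using s2 unfolding shellable_def by blast
  have nv1: "v \<notin> F" if "F \<in> set Fs1" for F using that F1(2) unfolding facets_def deletion_def by auto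
  have nv2: "v \<notin> F" if "F \<in> set Fs2" for F using that F2(2) unfolding facets_def link_def by auto
  define Fs where "Fs = Fs1 @ map (insert v) Fs2"
  have inj: "inj_on (insert v) (set Fs2)"
    by (rule inj_onI) (metis Diff_insert_absorb nv2)
  have "distinct Fs" unfolding Fs_def using F1(1) F2(1) inj nv1
    by (auto simp: distinct_map)
  moreover have "set Fs = facets \<Delta>" unfolding Fs_def using facets_split[OF sh dc] F1(2) F2(2) by auto
  moreover have "\<forall>i j. i < j \<and> j < length Fs \<longrightarrow> (\<exists>u \<in> Fs ! j - Fs ! i. \<exists>l < j. Fs ! j - Fs ! l = {u})"
  proof (intro allI impI)
    fix i j assume ij: "i < j \<and> j < length Fs"
    let ?n = "length Fs1"
    show "\<exists>u \<in> Fs ! j - Fs ! i. \<exists>l < j. Fs ! j - Fs ! l = {u}"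
    proof (cases "j < ?n")
      case True
      then obtain u l where "u \<in> Fs1 ! j - Fs1 ! i" "l < j" "Fs1 ! j - Fs1 ! l = {u}"
        using F1(3) ij by blast
      moreover have "l < length Fs1" using True \<open>l < j\<close> by auto
      ultimately show ?thesis using True ij unfolding Fs_def
        by (intro bexI[of _ u] exI[of _ l]) (auto simp: nth_append)
    next
      case False
      define j' where "j' = j - ?n"
      have j': "j' < length Fs2" "Fs ! j = insert v (Fs2 ! j')"
        using False ij unfolding Fs_def j'_def by (auto simp: nth_append)
      have vj: "v \<notin> Fs2 ! j'" using nv2 j' by auto
      show ?thesis
      proof (cases "i < ?n")
        case True
        have "Fs2 ! j' \<in> link \<Delta> {v}" using F2(2) j' unfolding facets_def by auto
        then have "Fs2 ! j' \<in> deletion \<Delta> {v}" using dc vj unfolding link_def deletion_def dclosed_def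
          by blast
        moreover have "finite (deletion \<Delta> {v})" using fin unfolding deletion_def by auto
        ultimately obtain H where H: "H \<in> facets (deletion \<Delta> {v})" "Fs2 ! j' \<subseteq> H"
          using facet_above by blast
        then obtain l where l: "l < ?n" "Fs1 ! l = H" using F1(2) by (metis in_set_conv_nth)
        have "v \<notin> H" using H(1) unfolding facets_def deletion_def by auto
        have "Fs ! i = Fs1 ! i" using True unfolding Fs_def by (auto simp: nth_append)
        moreover have "v \<notin> Fs1 ! i" using nv1 True by auto
        moreover have "Fs ! l = H" using l unfolding Fs_def by (auto simp: nth_append)
        moreover have "Fs ! j - H = {v}" using j' H(2) \<open>v \<notin> H\<close> by auto
        moreover have "l < j" using l False by auto
        ultimately show ?thesis using j'
          by (intro bexI[of _ v] exI[of _ l]) auto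
      next
        case False2: False
        define i' where "i' = i - ?n"
        have i': "i' < j'" "Fs ! i = insert v (Fs2 ! i')"
          using False2 ij unfolding Fs_def i'_def j'_def by (auto simp: nth_append)
        then obtain u l where ul: "u \<in> Fs2 ! j' - Fs2 ! i'" "l < j'" "Fs2 ! j' - Fs2 ! l = {u}"
          using F2(3) j' by blast
        have "Fs ! (l + ?n) = insert v (Fs2 ! l)" unfolding Fs_def using ul j'
          by (simp add: nth_append)
        moreover have "l + ?n < j" using ul j'_def False by auto
        moreover have "u \<noteq> v" using ul vj by auto
        ultimately show ?thesis using ul i' j' vj
          by (intro bexI[of _ u] exI[of _ "l + ?n"]) auto
      qed
    qed
  qed
  ultimately have "distinct Fs \<and> set Fs = facets \<Delta> \<and> (\<forall>i j. i < j \<and> j < length Fs \<longrightarrow> (\<exists>u \<in> Fs ! j - Fs ! i. \<exists>l < j. Fs ! j - Fs ! l = {u}))"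
    by blast
  then show ?thesis unfolding shellable_def by blast
qed

lemma simplex_shellable: "is_simplex \<Delta> \<Longrightarrow> shellable \<Delta>"
proof -
  assume "is_simplex \<Delta>"
  then consider "\<Delta> = {}" | F where "\<Delta> = Pow F" unfolding is_simplex_def by blast
  then show ?thesis
  proof cases
    case 1
    then have "facets \<Delta> = {}" unfolding facets_def by auto
    then show ?thesis unfolding shellable_def by (intro exI[of _ "[]"]) auto
  next
    case 2
    then have "facets \<Delta> = {F}" unfolding facets_def by auto
    then show ?thesis unfolding shellable_def by (intro exI[of _ "[F]"]) auto
  qed
qed


definition cplx :: "'b set set \<Rightarrow> 'b set \<Rightarrow> 'b set \<Rightarrow> 'b set \<Rightarrow> 'b set set" where
  "cplx \<Delta> N A D = {F. F \<subseteq> N - A - D \<and> F \<union> A \<in> \<Delta>}"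

lemma cplx_link: "v \<in> N - A - D \<Longrightarrow> link (cplx \<Delta> N A D) {v} = cplx \<Delta> N (insert v A) D"
  unfolding cplx_def link_def by (auto simp: Un_commute insert_commute)

lemma cplx_del: "deletion (cplx \<Delta> N A D) {v} = cplx \<Delta> N A (insert v D)"
  unfolding cplx_def deletion_def by auto

lemma cplx_free: assumes "dclosed \<Delta>" "insert v A \<notin> \<Delta>" shows "cplx \<Delta> N A D = cplx \<Delta> N A (insert v D)"
proof -
  have "v \<notin> F" if "F \<union> A \<in> \<Delta>" for F
  proof
    assume "v \<in> F"
    then have "insert v A \<subseteq> F \<union> A" by auto
    then show False using assms that unfolding dclosed_def by blast
  qed
  then show ?thesis unfolding cplx_def by (intro Collect_cong) auto
qed

lemma cplx_empty: "dclosed \<Delta> \<Longrightarrow> A \<notin> \<Delta> \<Longrightarrow> cplx \<Delta> N A D = {}"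
proof -
  assume a: "dclosed \<Delta>" "A \<notin> \<Delta>"
  have "F \<union> A \<notin> \<Delta>" for F using a unfolding dclosed_def by (meson Un_upper2)
  then show ?thesis unfolding cplx_def by simp
qed

lemma cplx_full: "dclosed \<Delta> \<Longrightarrow> (N - A - D) \<union> A \<in> \<Delta> \<Longrightarrow> cplx \<Delta> N A D = Pow (N - A - D)"
proof -
  assume a: "dclosed \<Delta>" "(N - A - D) \<union> A \<in> \<Delta>"
  have "F \<union> A \<in> \<Delta>" if "F \<subseteq> N - A - D" for F
  proof -
    have "F \<union> A \<subseteq> (N - A - D) \<union> A" using that by auto
    then show ?thesis using a unfolding dclosed_def by blast
  qed
  then show ?thesis unfolding cplx_def by auto
qed

lemma cplx_fin: "finite N \<Longrightarrow> finite (cplx \<Delta> N A D)"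
  unfolding cplx_def by (rule finite_subset[of _ "Pow N"]) auto

lemma cplx_dc: "dclosed \<Delta> \<Longrightarrow> dclosed (cplx \<Delta> N A D)"
proof -
  assume a: "dclosed \<Delta>"
  show ?thesis unfolding dclosed_def
  proof (intro ballI allI impI)
    fix S T assume "S \<in> cplx \<Delta> N A D" "T \<subseteq> S"
    moreover have "T \<union> A \<subseteq> S \<union> A" using \<open>T \<subseteq> S\<close> by auto
    ultimately show "T \<in> cplx \<Delta> N A D" using a unfolding cplx_def dclosed_def by blast
  qed
qed

lemma shed_cplx:
  assumes "v \<in> N - A - D" "insert v A \<in> \<Delta>"
    and "\<And>\<tau>. \<tau> \<subseteq> N - A - D \<Longrightarrow> \<tau> \<union> A \<in> \<Delta> \<Longrightarrow> v \<in> \<tau> \<Longrightarrow>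
           \<exists>w \<in> N - A - D. w \<notin> \<tau> \<and> insert w (\<tau> \<union> A) - {v} \<in> \<Delta>"
  shows "shedding_face (cplx \<Delta> N A D) {v}"
  unfolding shedding_face_def
proof (intro conjI ballI impI)
  show "{v} \<in> cplx \<Delta> N A D" using assms(1,2) unfolding cplx_def by auto
next
  fix \<tau> u assume \<tau>: "\<tau> \<in> cplx \<Delta> N A D" "{v} \<subseteq> \<tau>" and u: "u \<in> {v}"
  then obtain w where w: "w \<in> N - A - D" "w \<notin> \<tau>" "insert w (\<tau> \<union> A) - {v} \<in> \<Delta>"
    using assms(3)[of \<tau>] unfolding cplx_def by auto
  have "(\<tau> \<union> {w}) - {u} \<union> A = insert w (\<tau> \<union> A) - {v}" using u assms(1) by auto
  moreover have "(\<tau> \<union> {w}) - {u} \<subseteq> N - A - D" using \<tau> w unfolding cplx_def by auto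
  ultimately show "\<exists>w. w \<notin> \<tau> \<and> \<tau> \<union> {w} - {u} \<in> cplx \<Delta> N A D"
    using w unfolding cplx_def by auto
qed

lemma gen_step:
  assumes "finite N" "dclosed \<Delta>" "v \<in> N - A - D" "0 \<le> k"
    and sh: "shedding_face (cplx \<Delta> N A D) {v}"
    and h1: "k_decomposable k (cplx \<Delta> N A (insert v D)) \<and> shellable (cplx \<Delta> N A (insert v D))"
    and h2: "k_decomposable k (cplx \<Delta> N (insert v A) D) \<and> shellable (cplx \<Delta> N (insert v A) D)"
  shows "k_decomposable k (cplx \<Delta> N A D) \<and> shellable (cplx \<Delta> N A D)"
proof
  have "dim_face {v} \<le> k" using assms(4) unfolding dim_face_def by simp
  then show "k_decomposable k (cplx \<Delta> N A D)"
    using k_decomposable.shed[OF sh] h1 h2 cplx_link[OF assms(3)] cplx_del by metis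
  show "shellable (cplx \<Delta> N A D)"
    using shell_step[OF sh cplx_dc[OF assms(2)] cplx_fin[OF assms(1)]] h1 h2
      cplx_link[OF assms(3)] cplx_del by metis
qed

lemma simplex_both: "is_simplex \<Delta> \<Longrightarrow> k_decomposable k \<Delta> \<and> shellable \<Delta>"
  using simplex_shellable k_decomposable.simplex by blast

lemma card_swap:
  assumes "finite K" "v \<in> S" "v \<in> K" "w \<in> K" "w \<notin> S"
  shows "card ((insert w S - {v}) \<inter> K) = card (S \<inter> K)"
proof -
  have e: "(insert w S - {v}) \<inter> K = insert w ((S \<inter> K) - {v})" using assms by auto
  have "finite (S \<inter> K)" using assms by auto
  then have "card (insert w ((S \<inter> K) - {v})) = Suc (card (S \<inter> K) - 1)"
    using assms by (simp add: card_insert_disjoint)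
  moreover have "card (S \<inter> K) \<ge> 1" using assms \<open>finite (S \<inter> K)\<close>
    by (metis IntI One_nat_def Suc_leI card_gt_0_iff empty_iff)
  ultimately show ?thesis using e by simp
qed


locale whisk =
  fixes V :: "'a set" and E :: "'a \<Rightarrow> 'a \<Rightarrow> bool" and \<Pi> :: "'a set list" and t :: nat
  assumes G: "simple_graph V E" and P: "clique_vertex_partition V E \<Pi>" and t2: "t \<ge> 2"
begin

abbreviation "N \<equiv> whisk_V V \<Pi> t"
abbreviation "Ew \<equiv> whisk_E E \<Pi> t"
abbreviation "\<Delta> \<equiv> CF t N Ew"

definition Xs :: "nat \<Rightarrow> ('a + nat \<times> nat) set" where
  "Xs i = (\<lambda>j. Inr (i, j)) ` {1..t-1}"
definition K :: "nat \<Rightarrow> ('a + nat \<times> nat) set" where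
  "K i = Inl ` (\<Pi> ! i) \<union> Xs i"

lemma finV: "finite V" using G unfolding simple_graph_def by auto

lemma blk_sub: "i < length \<Pi> \<Longrightarrow> \<Pi> ! i \<subseteq> V"
  using P unfolding clique_vertex_partition_def is_clique_def by auto

lemma blk_clq: "i < length \<Pi> \<Longrightarrow> a \<in> \<Pi> ! i \<Longrightarrow> b \<in> \<Pi> ! i \<Longrightarrow> a \<noteq> b \<Longrightarrow> E a b"
  using P unfolding clique_vertex_partition_def is_clique_def by auto

lemma cover: "u \<in> V \<Longrightarrow> \<exists>i < length \<Pi>. u \<in> \<Pi> ! i"
  using P unfolding clique_vertex_partition_def by (auto simp: in_set_conv_nth)

lemma inN_Inl: "Inl u \<in> N \<longleftrightarrow> u \<in> V"
  unfolding whisk_V_def by auto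

lemma inN_Inr: "Inr (i, j) \<in> N \<longleftrightarrow> i < length \<Pi> \<and> 1 \<le> j \<and> j \<le> t - 1"
  unfolding whisk_V_def by auto

lemma finN: "finite N"
proof -
  have "{Inr (i, j) | i j. i < length \<Pi> \<and> 1 \<le> j \<and> j \<le> t - 1}
        \<subseteq> (\<lambda>(i, j). Inr (i, j)) ` ({..<length \<Pi>} \<times> {1..t-1})" by auto
  then have "finite {Inr (i, j) | i j. i < length \<Pi> \<and> 1 \<le> j \<and> j \<le> t - 1}"
    by (rule finite_subset) auto
  then show ?thesis unfolding whisk_V_def using finV by auto
qed

lemma cardX: "card (Xs i) = t - 1"
proof -
  have "inj_on (\<lambda>j. Inr (i, j) :: 'a + nat \<times> nat) {1..t-1}" by (auto simp: inj_on_def)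
  then show ?thesis unfolding Xs_def by (simp add: card_image)
qed

lemma X_sub_N: "i < length \<Pi> \<Longrightarrow> Xs i \<subseteq> N"
  unfolding Xs_def whisk_V_def by auto

lemma K_sub_N: "i < length \<Pi> \<Longrightarrow> K i \<subseteq> N"
  using X_sub_N[of i] blk_sub[of i] unfolding K_def whisk_V_def by blast

lemma finK: "i < length \<Pi> \<Longrightarrow> finite (K i)"
  using K_sub_N finN finite_subset by blast

lemma Inr_in_K: "Inr (i', j) \<in> K i \<Longrightarrow> i' = i \<and> Inr (i', j) \<in> Xs i"
  unfolding K_def Xs_def by auto

lemma K_clique: assumes "i < length \<Pi>" "C \<subseteq> K i" shows "is_clique N Ew C"
  unfolding is_clique_def
proof (intro conjI ballI impI)
  show "C \<subseteq> N" using assms K_sub_N by auto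
next
  fix x y assume xy: "x \<in> C" "y \<in> C" "x \<noteq> y"
  then have "x \<in> K i" "y \<in> K i" using assms by auto
  then show "Ew x y"
  proof (cases x; cases y)
    fix a b assume "x = Inl a" "y = Inl b"
    then show ?thesis using \<open>x \<in> K i\<close> \<open>y \<in> K i\<close> xy blk_clq[OF assms(1)]
      unfolding K_def Xs_def by auto
  next
    fix a p assume "x = Inl a" "y = Inr p"
    then show ?thesis using \<open>x \<in> K i\<close> \<open>y \<in> K i\<close> assms(1)
      unfolding K_def Xs_def by (cases p) auto
  next
    fix p a assume "x = Inr p" "y = Inl a"
    then show ?thesis using \<open>x \<in> K i\<close> \<open>y \<in> K i\<close> assms(1)
      unfolding K_def Xs_def by (cases p) auto
  next
    fix p q assume "x = Inr p" "y = Inr q"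
    then show ?thesis using \<open>x \<in> K i\<close> \<open>y \<in> K i\<close> assms(1) xy
      unfolding K_def Xs_def by (cases p; cases q) auto
  qed
qed

lemma clique_Inr:
  assumes "is_clique N Ew C" "Inr (i, j) \<in> C"
  shows "i < length \<Pi> \<and> C \<subseteq> K i"
proof -
  have ij: "i < length \<Pi>" "1 \<le> j" "j \<le> t - 1" using assms inN_Inr unfolding is_clique_def by auto
  have "c \<in> K i" if c: "c \<in> C" for c
  proof (cases "c = Inr (i, j)")
    case True then show ?thesis using ij unfolding K_def Xs_def by auto
  next
    case False
    then have e: "Ew (Inr (i, j)) c" using assms c unfolding is_clique_def by auto
    show ?thesis
    proof (cases c)
      case (Inl u) then show ?thesis using e unfolding K_def by auto
    next
      case (Inr p) then show ?thesis using e unfolding K_def Xs_def by (cases p) auto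
    qed
  qed
  then show ?thesis using ij by auto
qed

lemma dcD: "dclosed \<Delta>"
  unfolding dclosed_def CF_def by blast

lemma subN: "S \<in> \<Delta> \<Longrightarrow> S \<subseteq> N" unfolding CF_def by auto

lemma cardK: assumes "S \<in> \<Delta>" "i < length \<Pi>" shows "card (S \<inter> K i) < t"
proof (rule ccontr)
  assume "\<not> card (S \<inter> K i) < t"
  then obtain C where C: "C \<subseteq> S \<inter> K i" "card C = t"
    using obtain_subset_with_card_n by (metis not_less)
  then have "is_clique N Ew C" using K_clique[OF assms(2)] by auto
  then show False using assms(1) C unfolding CF_def by blast
qed

lemma swap:
  assumes S: "S \<in> \<Delta>" and i: "i < length \<Pi>" and w: "w \<in> Xs i"
    and T: "T \<subseteq> insert w S" "T \<subseteq> N" and c: "card (T \<inter> K i) < t"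
  shows "T \<in> \<Delta>"
  unfolding CF_def
proof (intro CollectI conjI notI)
  show "T \<subseteq> N" by fact
next
  assume "\<exists>C\<subseteq>T. card C = t \<and> is_clique N Ew C"
  then obtain C where C: "C \<subseteq> T" "card C = t" "is_clique N Ew C" by blast
  show False
  proof (cases "w \<in> C")
    case True
    obtain j where "w = Inr (i, j)" using w unfolding Xs_def by auto
    then have "C \<subseteq> K i" using clique_Inr[OF C(3)] True by auto
    then have "C \<subseteq> T \<inter> K i" using C by auto
    then have "card C \<le> card (T \<inter> K i)" using finK[OF i] by (meson card_mono finite_Int)
    then show False using C c by auto
  next
    case False
    then have "C \<subseteq> S" using C T by auto
    then show False using S C unfolding CF_def by blast
  qed
qed

lemma main:
  assumes k: "0 \<le> k"
  shows "D \<inter> range Inr = {} \<or> Inl ` V \<subseteq> A \<union> D \<Longrightarrow>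
         k_decomposable k (cplx \<Delta> N A D) \<and> shellable (cplx \<Delta> N A D)"
proof (induction "card (N - A - D)" arbitrary: A D rule: less_induct)
  case less
  define U where "U = N - A - D"
  have finU: "finite U" unfolding U_def using finN by auto
  have IH: "k_decomposable k (cplx \<Delta> N A' D') \<and> shellable (cplx \<Delta> N A' D')"
    if "card (N - A' - D') < card (N - A - D)" "D' \<inter> range Inr = {} \<or> Inl ` V \<subseteq> A' \<union> D'"
    for A' D' using less.hyps that by blast
  have dec1: "card (N - A - insert v D) < card (N - A - D)" if "v \<in> U" for v
  proof -
    have "N - A - insert v D = U - {v}" unfolding U_def by auto
    moreover have "card (U - {v}) < card U" by (rule card_Diff1_less[OF finU that])
    ultimately show ?thesis unfolding U_def by metis
  qed
  have dec2: "card (N - insert v A - D) < card (N - A - D)" if "v \<in> U" for v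
  proof -
    have "N - insert v A - D = U - {v}" unfolding U_def by auto
    moreover have "card (U - {v}) < card U" by (rule card_Diff1_less[OF finU that])
    ultimately show ?thesis unfolding U_def by metis
  qed
  show ?case
  proof (cases "\<exists>u. Inl u \<in> U")
    case True
    then obtain u where u: "Inl u \<in> U" by blast
    define v :: "'a + nat \<times> nat" where "v = Inl u"
    have vU: "v \<in> N - A - D" using u unfolding v_def U_def by auto
    have uV: "u \<in> V" using u inN_Inl unfolding U_def by auto
    have inv: "D \<inter> range Inr = {}" using less.prems u uV unfolding U_def by auto
    obtain i where i: "i < length \<Pi>" "u \<in> \<Pi> ! i" using cover[OF uV] by blast
    show ?thesis
    proof (cases "insert v A \<in> \<Delta>")
      case False
      have "cplx \<Delta> N A D = cplx \<Delta> N A (insert v D)" using cplx_free[OF dcD False] .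
      moreover have "insert v D \<inter> range Inr = {}" using inv unfolding v_def by auto
      ultimately show ?thesis using IH dec1[of v] vU unfolding U_def by auto
    next
      case True
      have sh: "shedding_face (cplx \<Delta> N A D) {v}"
      proof (rule shed_cplx[OF vU True])
        fix \<tau> assume \<tau>: "\<tau> \<subseteq> N - A - D" "\<tau> \<union> A \<in> \<Delta>" "v \<in> \<tau>"
        define S where "S = \<tau> \<union> A"
        have S: "S \<in> \<Delta>" "v \<in> S" using \<tau> unfolding S_def by auto
        have cS: "card (S \<inter> K i) < t" using cardK[OF S(1) i(1)] .
        have vK: "v \<in> K i" "v \<notin> Xs i" using i unfolding v_def K_def Xs_def by auto
        have "insert v (S \<inter> Xs i) \<subseteq> S \<inter> K i" using S vK unfolding K_def by auto
        moreover have "finite (S \<inter> K i)" using finK[OF i(1)] by auto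
        ultimately have "card (insert v (S \<inter> Xs i)) \<le> card (S \<inter> K i)" by (rule card_mono[rotated])
        moreover have "finite (S \<inter> Xs i)" using finK[OF i(1)] unfolding K_def by auto
        ultimately have "Suc (card (S \<inter> Xs i)) < t" using cS vK by simp
        then have "\<not> Xs i \<subseteq> S" using cardX[of i] by (metis Int_absorb1 Int_commute
              Suc_diff_1 less_imp_Suc_add not_less_eq zero_less_Suc less_irrefl_nat add_Suc_right
              Suc_less_eq diff_Suc_1 less_diff_conv)
        then obtain w where w: "w \<in> Xs i" "w \<notin> S" by blast
        have wN: "w \<in> N" using X_sub_N[OF i(1)] w by auto
        have wD: "w \<notin> D" using w inv unfolding Xs_def by auto
        have "insert w S - {v} \<in> \<Delta>"
        proof (rule swap[OF S(1) i(1) w(1)])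
          show "insert w S - {v} \<subseteq> insert w S" by auto
          show "insert w S - {v} \<subseteq> N" using subN[OF S(1)] wN by auto
          have "card ((insert w S - {v}) \<inter> K i) = card (S \<inter> K i)"
            using card_swap[OF finK[OF i(1)] S(2) vK(1) _ w(2)] w(1) unfolding K_def by auto
          then show "card ((insert w S - {v}) \<inter> K i) < t" using cS by simp
        qed
        then show "\<exists>w \<in> N - A - D. w \<notin> \<tau> \<and> insert w (\<tau> \<union> A) - {v} \<in> \<Delta>"
          using w wN wD unfolding S_def by (intro bexI[of _ w]) auto
      qed
      have h1: "k_decomposable k (cplx \<Delta> N A (insert v D)) \<and> shellable (cplx \<Delta> N A (insert v D))"
        using IH[of A "insert v D"] dec1[of v] vU inv unfolding U_def v_def by auto
      have h2: "k_decomposable k (cplx \<Delta> N (insert v A) D) \<and> shellable (cplx \<Delta> N (insert v A) D)"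
        using IH[of "insert v A" D] dec2[of v] vU inv unfolding U_def v_def by auto
      show ?thesis using gen_step[OF finN dcD vU k sh h1 h2] .
    qed
  next
    case False
    have phase2: "Inl ` V \<subseteq> A \<union> D" using False inN_Inl unfolding U_def by auto
    show ?thesis
    proof (cases "A \<in> \<Delta>")
      case False
      have "is_simplex (cplx \<Delta> N A D)" unfolding is_simplex_def using cplx_empty[OF dcD False] by simp
      then show ?thesis by (rule simplex_both)
    next
      case A: True
      show ?thesis
      proof (cases "U \<union> A \<in> \<Delta>")
        case True
        then have "cplx \<Delta> N A D = Pow U" using cplx_full[OF dcD] unfolding U_def by blast
        then have "is_simplex (cplx \<Delta> N A D)" using finU unfolding is_simplex_def by blast
        then show ?thesis by (rule simplex_both)
      next
        case notfull: False
        have "U \<union> A \<subseteq> N" using subN[OF A] unfolding U_def by auto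
        then obtain C where C: "C \<subseteq> U \<union> A" "card C = t" "is_clique N Ew C"
          using notfull unfolding CF_def by blast
        have "\<not> C \<subseteq> A" using A C unfolding CF_def by blast
        then obtain c where c: "c \<in> C" "c \<notin> A" by blast
        then have cU: "c \<in> U" using C by auto
        then obtain i j where cij: "c = Inr (i, j)" using False by (cases c) auto
        have i: "i < length \<Pi>" and CK: "C \<subseteq> K i" using clique_Inr[OF C(3)] c cij by auto
        have cUAK: "t \<le> card ((U \<union> A) \<inter> K i)"
        proof -
          have "C \<subseteq> (U \<union> A) \<inter> K i" using C CK by auto
          then show ?thesis using C(2) finK[OF i] by (metis card_mono finite_Int)
        qed
        have vU: "c \<in> N - A - D" using cU unfolding U_def .
        have inv1: "Inl ` V \<subseteq> A \<union> insert c D" "Inl ` V \<subseteq> insert c A \<union> D" using phase2 by auto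
        show ?thesis
        proof (cases "insert c A \<in> \<Delta>")
          case False
          have "cplx \<Delta> N A D = cplx \<Delta> N A (insert c D)" using cplx_free[OF dcD False] .
          then show ?thesis using IH[of A "insert c D"] dec1[OF cU] inv1 by auto
        next
          case True
          have sh: "shedding_face (cplx \<Delta> N A D) {c}"
          proof (rule shed_cplx[OF vU True])
            fix \<tau> assume \<tau>: "\<tau> \<subseteq> N - A - D" "\<tau> \<union> A \<in> \<Delta>" "c \<in> \<tau>"
            define S where "S = \<tau> \<union> A"
            have S: "S \<in> \<Delta>" "c \<in> S" using \<tau> unfolding S_def by auto
            have cS: "card (S \<inter> K i) < t" using cardK[OF S(1) i] .
            have "\<not> (U \<union> A) \<inter> K i \<subseteq> S \<inter> K i"
            proof
              assume "(U \<union> A) \<inter> K i \<subseteq> S \<inter> K i"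
              then have "card ((U \<union> A) \<inter> K i) \<le> card (S \<inter> K i)"
                using finK[OF i] by (meson card_mono finite_Int)
              then show False using cS cUAK by auto
            qed
            then obtain w where w: "w \<in> U \<union> A" "w \<in> K i" "w \<notin> S" by blast
            have wU: "w \<in> U" "w \<notin> \<tau>" using w unfolding S_def by auto
            then obtain i' j' where wij: "w = Inr (i', j')" using False by (cases w) auto
            have wX: "w \<in> Xs i" using Inr_in_K[of i' j' i] w(2) wij by auto
            have cK: "c \<in> K i" using CK c by auto
            have "insert w S - {c} \<in> \<Delta>"
            proof (rule swap[OF S(1) i wX])
              show "insert w S - {c} \<subseteq> insert w S" by auto
              show "insert w S - {c} \<subseteq> N" using subN[OF S(1)] wU unfolding U_def by auto
              have "card ((insert w S - {c}) \<inter> K i) = card (S \<inter> K i)"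
                using card_swap[OF finK[OF i] S(2) cK w(2) w(3)] .
              then show "card ((insert w S - {c}) \<inter> K i) < t" using cS by simp
            qed
            then show "\<exists>w \<in> N - A - D. w \<notin> \<tau> \<and> insert w (\<tau> \<union> A) - {c} \<in> \<Delta>"
              using wU unfolding S_def U_def by (intro bexI[of _ w]) auto
          qed
          have h1: "k_decomposable k (cplx \<Delta> N A (insert c D)) \<and> shellable (cplx \<Delta> N A (insert c D))"
            using IH[of A "insert c D"] dec1[OF cU] inv1 by auto
          have h2: "k_decomposable k (cplx \<Delta> N (insert c A) D) \<and> shellable (cplx \<Delta> N (insert c A) D)"
            using IH[of "insert c A" D] dec2[OF cU] inv1 by auto
          show ?thesis using gen_step[OF finN dcD vU k sh h1 h2] .
        qed
      qed
    qed
  qed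
qed

end


theorem theorem4p9:
  fixes V :: "'a set" and E :: "'a \<Rightarrow> 'a \<Rightarrow> bool" and \<Pi> :: "'a set list" and t :: nat
  assumes "simple_graph V E"
    and "clique_vertex_partition V E \<Pi>"
    and "t \<ge> 2"
  shows "k_decomposable (int t - 2) (CF t (whisk_V V \<Pi> t) (whisk_E E \<Pi> t))
       \<and> shellable (CF t (whisk_V V \<Pi> t) (whisk_E E \<Pi> t))"
proof -
  interpret whisk V E \<Pi> t using assms by unfold_locales
  have e: "cplx (CF t (whisk_V V \<Pi> t) (whisk_E E \<Pi> t)) (whisk_V V \<Pi> t) {} {}
      = CF t (whisk_V V \<Pi> t) (whisk_E E \<Pi> t)"
    unfolding cplx_def using subN by auto
  have "0 \<le> int t - 2" using assms(3) by simp
  from main[OF this, of "{}" "{}"] show ?thesis unfolding e by simp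
qed

end
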